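(* Let $(X,\mathbb{A},d)$ be a complete $C^*$-algebra valued metric space, where $\mathbb{A}$ is a unital $C^*$-algebra. Let $T,S:X\to X$ be mappings such that $$d(T^n x,(ST)^n y)\preceq (q(x,y)^* )^n\,\delta(x,y)\,q(x,y)^n\quad\text{for all }x,y\in X,\ n\in\mathbb{N},$$ where $q:X\times X\to\mathbb{A}$ satisfies $0\le\|q(x,y)\|<1$ for all $x,y\in X$ and $\delta:X\times X\to\mathbb{A}_+$ is a mapping, and $ST$ denotes the composition $S\circ T$. If $T$ and $ST$ are both orbitally continuous on $X$, then $T$ and $S$ have a unique common fixed point in $X$.
   Context: $\mathbb{A}$ denotes a unital $C^*$-algebra with unit $I$ and zero $\theta$. An element $a\in\mathbb{A}$ is positive, written $a\succeq\theta$, if $a^*=a$ and its spectrum is contained in $[0,\infty)$; $\mathbb{A}_+$ is the set of positive elements, and $a\succeq b$ means $a-b\succeq\theta$. A $C^*$-algebra valued metric space $(X,\mathbb{A},d)$ is a nonempty set $X$ with $d:X\times X\to\mathbb{A}$ such that for all $x,y,z\in X$: $d(x,y)\succeq\theta$, with $d(x,y)=\theta$ iff $x=y$; $d(x,y)=d(y,x)$; $d(x,y)\preceq d(x,z)+d(z,y)$. A sequence $\{x_n\}$ converges to $x$ if $\|d(x_n,x)\|\to0$, and is Cauchy if $\|d(x_n,x_m)\|\to0$ as $n,m\to\infty$; the space is complete if every Cauchy sequence converges to a point of $X$. A self-map $T$ of $X$ is orbitally continuous at $u\in X$ if for every $x\in X$ and every increasing sequence of positive integers $\{n_i\}$, $\|d(T^{n_i}x,u)\|\to0$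 implies $\|d(T^{n_i+1}x,Tu)\|\to0$ as $i\to\infty$; $T$ is orbitally continuous on $X$ if it is orbitally continuous at every $u\in X$. *)

theory Defs
  imports "HOL-Analysis.Analysis"
begin

class unital_cstar_algebra = banach + real_normed_algebra_1 +
  fixes cs_scale :: "complex \<Rightarrow> 'a \<Rightarrow> 'a"
    and cs_star :: "'a \<Rightarrow> 'a"
  assumes cs_scale_add_right: "cs_scale c (a + b) = cs_scale c a + cs_scale c b"
    and cs_scale_add_left: "cs_scale (c + e) a = cs_scale c a + cs_scale e a"
    and cs_scale_scale: "cs_scale c (cs_scale e a) = cs_scale (c * e) a"
    and cs_scale_one: "cs_scale 1 a = a"
    and cs_scale_of_real: "cs_scale (complex_of_real r) a = r *\<^sub>R a"
    and cs_scale_norm: "norm (cs_scale c a) = cmod c * norm a"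
    and cs_scale_mult_left: "cs_scale c (a * b) = cs_scale c a * b"
    and cs_scale_mult_right: "cs_scale c (a * b) = a * cs_scale c b"
    and cs_star_star: "cs_star (cs_star a) = a"
    and cs_star_add: "cs_star (a + b) = cs_star a + cs_star b"
    and cs_star_scale: "cs_star (cs_scale c a) = cs_scale (cnj c) (cs_star a)"
    and cs_star_mult: "cs_star (a * b) = cs_star b * cs_star a"
    and cs_identity: "norm (cs_star a * a) = norm a ^ 2"

definition cs_spectrum :: "'a::unital_cstar_algebra \<Rightarrow> complex set" where
  "cs_spectrum a = {z. \<not> (\<exists>b. (a - cs_scale z 1) * b = 1 \<and> b * (a - cs_scale z 1) = 1)}"

definition cs_pos :: "'a::unital_cstar_algebra \<Rightarrow> bool" where
  "cs_pos a \<longleftrightarrow> cs_star a = a \<and> cs_spectrum a \<subseteq> {z. Im z = 0 \<and> Re z \<ge> 0}"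

definition cs_le :: "'a::unital_cstar_algebra \<Rightarrow> 'a \<Rightarrow> bool" where
  "cs_le a b \<longleftrightarrow> cs_pos (b - a)"

text \<open>The underlying set X is the whole (nonempty) type 'x.\<close>

definition cs_metric :: "('x \<Rightarrow> 'x \<Rightarrow> 'a::unital_cstar_algebra) \<Rightarrow> bool" where
  "cs_metric d \<longleftrightarrow>
     (\<forall>x y. cs_pos (d x y) \<and> (d x y = 0 \<longleftrightarrow> x = y)) \<and>
     (\<forall>x y. d x y = d y x) \<and>
     (\<forall>x y z. cs_le (d x y) (d x z + d z y))"

definition cs_converges :: "('x \<Rightarrow> 'x \<Rightarrow> 'a::unital_cstar_algebra) \<Rightarrow> (nat \<Rightarrow> 'x) \<Rightarrow> 'x \<Rightarrow> bool" where
  "cs_converges d s x \<longleftrightarrow> (\<lambda>n. norm (d (s n) x)) \<longlonglongrightarrow> 0"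

definition cs_cauchy :: "('x \<Rightarrow> 'x \<Rightarrow> 'a::unital_cstar_algebra) \<Rightarrow> (nat \<Rightarrow> 'x) \<Rightarrow> bool" where
  "cs_cauchy d s \<longleftrightarrow> (\<forall>e>0. \<exists>N. \<forall>n\<ge>N. \<forall>m\<ge>N. norm (d (s n) (s m)) < e)"

definition cs_complete :: "('x \<Rightarrow> 'x \<Rightarrow> 'a::unital_cstar_algebra) \<Rightarrow> bool" where
  "cs_complete d \<longleftrightarrow> (\<forall>s. cs_cauchy d s \<longrightarrow> (\<exists>x. cs_converges d s x))"

definition orbitally_continuous_at ::
  "('x \<Rightarrow> 'x \<Rightarrow> 'a::unital_cstar_algebra) \<Rightarrow> ('x \<Rightarrow> 'x) \<Rightarrow> 'x \<Rightarrow> bool" where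
  "orbitally_continuous_at d T u \<longleftrightarrow>
     (\<forall>x ni. strict_mono ni \<longrightarrow>
        cs_converges d (\<lambda>i. (T ^^ ni i) x) u \<longrightarrow>
        cs_converges d (\<lambda>i. (T ^^ (ni i + 1)) x) (T u))"

definition orbitally_continuous ::
  "('x \<Rightarrow> 'x \<Rightarrow> 'a::unital_cstar_algebra) \<Rightarrow> ('x \<Rightarrow> 'x) \<Rightarrow> bool" where
  "orbitally_continuous d T \<longleftrightarrow> (\<forall>u. orbitally_continuous_at d T u)"

end

theory Submission
  imports Defs
begin


definition emb :: "complex \<Rightarrow> 'a::unital_cstar_algebra" where
  "emb c = cs_scale c 1"

definition isinv :: "'a::unital_cstar_algebra \<Rightarrow> 'a \<Rightarrow> bool" where
  "isinv a b \<longleftrightarrow> a * b = 1 \<and> b * a = 1"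

lemma scale_emb: "cs_scale c a = emb c * (a::'a::unital_cstar_algebra)"
  unfolding emb_def using cs_scale_mult_left[of c 1 a] by simp

lemma scale_emb': "cs_scale c a = (a::'a::unital_cstar_algebra) * emb c"
  unfolding emb_def using cs_scale_mult_right[of c a 1] by simp

lemma emb_comm: "emb c * (a::'a::unital_cstar_algebra) = a * emb c"
  using scale_emb scale_emb' by metis

lemma emb_add: "emb (c + e) = (emb c + emb e :: 'a::unital_cstar_algebra)"
  unfolding emb_def by (rule cs_scale_add_left)

lemma emb_mult: "emb (c * e) = (emb c * emb e :: 'a::unital_cstar_algebra)"
  unfolding emb_def by (metis cs_scale_scale emb_def scale_emb)

lemma emb_one[simp]: "emb 1 = (1 :: 'a::unital_cstar_algebra)"
  unfolding emb_def by (rule cs_scale_one)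

lemma emb_zero[simp]: "emb 0 = (0 :: 'a::unital_cstar_algebra)"
  using emb_add[of 0 0, where 'a='a] by simp

lemma emb_minus: "emb (- c) = (- emb c :: 'a::unital_cstar_algebra)"
  using emb_add[of c "-c", where 'a='a] by (simp add: add_eq_0_iff2)

lemma emb_diff: "emb (c - e) = (emb c - emb e :: 'a::unital_cstar_algebra)"
  using emb_add[of c "-e", where 'a='a] emb_minus[of e, where 'a='a] by simp

lemma emb_real: "emb (complex_of_real r) = (of_real r :: 'a::unital_cstar_algebra)"
  unfolding emb_def using cs_scale_of_real[of r "1::'a"] by (simp add: of_real_def)

lemma emb_of_nat: "emb (of_nat n) = (of_nat n :: 'a::unital_cstar_algebra)"
  using emb_real[of "real n", where 'a='a] by simp

lemma norm_emb[simp]: "norm (emb c :: 'a::unital_cstar_algebra) = cmod c"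
  unfolding emb_def by (simp add: cs_scale_norm)

lemma emb_power: "emb (c ^ n) = (emb c ^ n :: 'a::unital_cstar_algebra)"
  by (induction n) (simp_all add: emb_mult)

lemma emb_sum: "emb (sum f A) = (\<Sum>x\<in>A. emb (f x) :: 'a::unital_cstar_algebra)"
  by (induction A rule: infinite_finite_induct) (simp_all add: emb_add)

lemma power_mult_emb: "(emb c * (x::'a::unital_cstar_algebra)) ^ n = emb (c ^ n) * x ^ n"
proof (induction n)
  case (Suc n)
  have "(emb c * x) ^ Suc n = emb c * x * (emb (c ^ n) * x ^ n)"
    using Suc by (simp add: power_commutes)
  also have "\<dots> = emb c * emb (c ^ n) * (x * x ^ n)"
    by (metis emb_comm mult.assoc)
  finally show ?case by (simp add: emb_mult)
qed simp

lemma star_one: "cs_star (1::'a::unital_cstar_algebra) = 1"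
proof -
  have "cs_star (1::'a) * cs_star (cs_star 1) = cs_star (cs_star 1 * 1)"
    by (rule cs_star_mult[symmetric])
  thus ?thesis by (metis cs_star_star mult_1_right)
qed

lemma star_zero[simp]: "cs_star (0::'a::unital_cstar_algebra) = 0"
  using cs_star_add[of "0::'a" 0] by simp

lemma star_minus: "cs_star (- a) = - cs_star (a::'a::unital_cstar_algebra)"
  using cs_star_add[of a "-a"] by (simp add: add_eq_0_iff2)

lemma star_diff: "cs_star (a - b) = cs_star a - cs_star (b::'a::unital_cstar_algebra)"
  using cs_star_add[of a "-b"] star_minus[of b] by simp

lemma star_emb: "cs_star (emb c) = (emb (cnj c) :: 'a::unital_cstar_algebra)"
  unfolding emb_def by (simp add: cs_star_scale star_one)

lemma star_power: "cs_star (a ^ n) = cs_star (a::'a::unital_cstar_algebra) ^ n"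
  by (induction n) (simp_all add: star_one cs_star_mult power_commutes)

lemma norm_star: "norm (cs_star a) = norm (a::'a::unital_cstar_algebra)"
proof -
  have le: "norm b \<le> norm (cs_star b)" for b :: 'a
  proof (cases "b = 0")
    case False
    have "norm b ^ 2 \<le> norm (cs_star b) * norm b"
      using cs_identity[of b] norm_mult_ineq[of "cs_star b" b] by simp
    thus ?thesis using False by (simp add: power2_eq_square)
  qed simp
  show ?thesis using le[of a] le[of "cs_star a"] cs_star_star[of a] by simp
qed

lemma norm_sa_sq: "cs_star h = h \<Longrightarrow> norm (h * h) = norm (h::'a::unital_cstar_algebra) ^ 2"
  using cs_identity[of h] by simp

lemma norm_sa_pow2: "cs_star h = h \<Longrightarrow> norm (h ^ (2 ^ k)) = norm (h::'a::unital_cstar_algebra) ^ (2 ^ k)"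
proof (induction k)
  case (Suc k)
  have sa: "cs_star (h ^ 2 ^ k) = h ^ 2 ^ k" using Suc.prems by (simp add: star_power)
  have "h ^ 2 ^ Suc k = h ^ 2 ^ k * h ^ 2 ^ k" by (simp add: power_add[symmetric] mult_2)
  hence "norm (h ^ 2 ^ Suc k) = norm (h ^ 2 ^ k) ^ 2" using norm_sa_sq[OF sa] by simp
  thus ?case using Suc by (simp add: power_mult[symmetric] mult.commute)
qed simp

lemma inv_unique: "isinv a b \<Longrightarrow> isinv a c \<Longrightarrow> b = c"
  unfolding isinv_def by (metis mult.assoc mult_1_left mult_1_right)

lemma inv_comm: "isinv a b \<Longrightarrow> a * x = x * a \<Longrightarrow> b * x = x * (b::'a::unital_cstar_algebra)"
  unfolding isinv_def by (metis mult.assoc mult_1_left mult_1_right)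



lemma neumann:
  fixes u :: "'a::unital_cstar_algebra"
  assumes "norm u < 1"
  shows "\<exists>b. isinv (1 - u) b"
proof -
  have sg: "summable (\<lambda>n. norm u ^ n)" using assms by (simp add: summable_geometric)
  have s: "summable (\<lambda>n. u ^ n)"
    by (rule summable_comparison_test'[OF sg]) (simp add: norm_power_ineq)
  define b where "b = suminf (\<lambda>n. u ^ n)"
  have sb: "(\<lambda>n. u ^ n) sums b" using s b_def by (simp add: summable_sums)
  have lim: "(\<lambda>n. u ^ n) \<longlonglongrightarrow> 0" using assms by (rule LIMSEQ_power_zero)
  have t: "(\<lambda>n. u ^ n - u ^ Suc n) sums (u ^ 0 - 0)" by (rule telescope_sums'[OF lim])
  have "(\<lambda>n. (1 - u) * u ^ n) sums ((1 - u) * b)" by (rule sums_mult[OF sb])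
  moreover have "(\<lambda>n. (1 - u) * u ^ n) = (\<lambda>n. u ^ n - u ^ Suc n)"
    by (simp add: algebra_simps)
  ultimately have 1: "(1 - u) * b = 1" using t sums_unique2 by fastforce
  have "(\<lambda>n. u ^ n * (1 - u)) sums (b * (1 - u))" by (rule sums_mult2[OF sb])
  moreover have "(\<lambda>n. u ^ n * (1 - u)) = (\<lambda>n. u ^ n - u ^ Suc n)"
    by (simp add: algebra_simps power_commutes)
  ultimately have 2: "b * (1 - u) = 1" using t sums_unique2 by fastforce
  show ?thesis using 1 2 unfolding isinv_def by blast
qed

lemma norm_emb_mult: "norm (emb c * (a::'a::unital_cstar_algebra)) = cmod c * norm a"
  using cs_scale_norm[of c a] by (simp add: scale_emb)

lemma spec_iff: "z \<in> cs_spectrum a \<longleftrightarrow> \<not> (\<exists>b. isinv (a - emb z) b)"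
  unfolding cs_spectrum_def isinv_def emb_def by simp

lemma isinv_scale:
  fixes p :: "'a::unital_cstar_algebra"
  assumes "isinv p q" "c \<noteq> 0"
  shows "isinv (emb c * p) (emb (1/c) * q)"
proof -
  have e: "emb c * emb (1/c) = (1::'a)" "emb (1/c) * emb c = (1::'a)"
    using assms(2) by (simp_all add: emb_mult[symmetric])
  have "emb c * p * (emb (1/c) * q) = emb c * emb (1/c) * (p * q)"
    by (metis emb_comm mult.assoc)
  moreover have "emb (1/c) * q * (emb c * p) = emb (1/c) * emb c * (q * p)"
    by (metis emb_comm mult.assoc)
  ultimately show ?thesis using assms(1) e unfolding isinv_def by simp
qed

lemma isinv_neg: "isinv p q \<Longrightarrow> isinv (- p) (- (q::'a::unital_cstar_algebra))"
  unfolding isinv_def by simp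

lemma spec_disk:
  fixes a :: "'a::unital_cstar_algebra"
  assumes "cmod z > norm a"
  shows "\<exists>b. isinv (a - emb z) b"
proof -
  have z0: "z \<noteq> 0" using assms norm_ge_zero[of a] by auto
  define u where "u = emb (1/z) * a"
  have "norm u = norm a / cmod z" unfolding u_def
    using norm_emb_mult[of "1/z" a] by (simp add: norm_divide)
  hence "norm u < 1" using assms z0 by (simp add: divide_less_eq)
  then obtain b where b: "isinv (1 - u) b" using neumann by blast
  have "isinv (- (emb z * (1 - u))) (- (emb (1/z) * b))"
    by (rule isinv_neg[OF isinv_scale[OF b z0]])
  moreover have "- (emb z * (1 - u)) = a - emb z"
    unfolding u_def using z0
    by (simp add: algebra_simps mult.assoc[symmetric] emb_mult[symmetric])
  ultimately show ?thesis by auto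
qed

lemma spec_le_norm: "z \<in> cs_spectrum a \<Longrightarrow> cmod z \<le> norm a"
  using spec_disk spec_iff by (metis not_le)

lemma spec_shift:
  fixes a :: "'a::unital_cstar_algebra"
  shows "z \<in> cs_spectrum (emb r - a) \<longleftrightarrow> r - z \<in> cs_spectrum a"
proof -
  have eq: "emb r - a - emb z = - (a - emb (r - z))" by (simp add: emb_diff)
  show ?thesis unfolding spec_iff eq
    by (metis isinv_neg minus_minus)
qed

lemma spec_real:
  fixes h :: "'a::unital_cstar_algebra"
  assumes sa: "cs_star h = h" and z: "z \<in> cs_spectrum h"
  shows "Im z = 0"
proof -
  have key: "(Im z + g)^2 \<le> norm h ^ 2 + g^2" for g :: real
  proof -
    define k where "k = h + emb (\<i> * of_real g)"
    have "k - emb (z + \<i> * of_real g) = h - emb z" unfolding k_def by (simp add: emb_add)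
    hence "z + \<i> * of_real g \<in> cs_spectrum k" using z by (simp add: spec_iff)
    hence c: "cmod (z + \<i> * of_real g) \<le> norm k" by (rule spec_le_norm)
    have sk: "cs_star k = h + emb (- (\<i> * of_real g))"
      unfolding k_def by (simp add: cs_star_add sa star_emb)
    have "cs_star k * k = h * h + (emb (- (\<i> * of_real g)) * h + h * emb (\<i> * of_real g))
          + emb (- (\<i> * of_real g)) * emb (\<i> * of_real g)"
      unfolding sk by (simp add: k_def algebra_simps)
    also have "emb (- (\<i> * of_real g)) * h + h * emb (\<i> * of_real g) = 0"
      by (simp add: emb_minus emb_comm)
    also have "emb (- (\<i> * of_real g)) * emb (\<i> * of_real g) = (emb (of_real (g^2)) :: 'a)"
    proof -
      have "- (\<i> * of_real g) * (\<i> * of_real g) = complex_of_real (g^2)"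
        by (simp add: power2_eq_square algebra_simps)
      thus ?thesis by (simp only: emb_mult[symmetric])
    qed
    finally have "cs_star k * k = h * h + of_real (g^2)" using emb_real[of "g^2", where 'a='a] by simp
    hence "norm k ^ 2 = norm (h * h + of_real (g^2))" using cs_identity[of k] by simp
    also have "\<dots> \<le> norm (h * h) + g^2"
    proof -
      have "norm (of_real (g^2) :: 'a) = g^2" by (simp only: norm_of_real) simp
      thus ?thesis using norm_triangle_ineq[of "h*h" "of_real (g^2)"] by linarith
    qed
    also have "norm (h * h) = norm h ^ 2" by (rule norm_sa_sq[OF sa])
    finally have nk: "norm k ^ 2 \<le> norm h ^ 2 + g^2" .
    have "cmod (z + \<i> * of_real g) ^ 2 = Re z ^ 2 + (Im z + g)^2"
      by (simp add: cmod_def)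
    moreover have "cmod (z + \<i> * of_real g) ^ 2 \<le> norm k ^ 2"
      using c by (simp add: power_mono)
    ultimately show ?thesis using nk by (smt (verit) zero_le_power2)
  qed
  show ?thesis
  proof (rule ccontr)
    assume ne: "Im z \<noteq> 0"
    have "(Im z + norm h ^ 2 / (2 * Im z))^2 \<le> norm h ^ 2 + (norm h ^ 2 / (2 * Im z))^2"
      by (rule key)
    moreover have "2 * Im z * (norm h ^ 2 / (2 * Im z)) = norm h ^ 2" using ne by simp
    ultimately have "Im z ^ 2 \<le> 0" unfolding power2_sum by linarith
    thus False using ne by simp
  qed
qed



lemma geom_ring:
  fixes a :: "'b::ring_1"
  shows "(1 - a) * (\<Sum>m<n. a ^ m) = 1 - a ^ n \<and> (\<Sum>m<n. a ^ m) * (1 - a) = 1 - a ^ n"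
proof (induction n)
  case (Suc n)
  have "(1 - a) * (\<Sum>m<Suc n. a ^ m) = (1 - a) * (\<Sum>m<n. a ^ m) + (1 - a) * a ^ n"
    by (simp add: distrib_left)
  also have "\<dots> = 1 - a ^ Suc n" using Suc by (simp add: algebra_simps)
  finally have 1: "(1 - a) * (\<Sum>m<Suc n. a ^ m) = 1 - a ^ Suc n" .
  have "(\<Sum>m<Suc n. a ^ m) * (1 - a) = (\<Sum>m<n. a ^ m) * (1 - a) + a ^ n * (1 - a)"
    by (simp add: distrib_right)
  also have "\<dots> = 1 - a ^ Suc n"
  proof -
    have comm: "(\<Sum>m<n. a^m) * a = a * (\<Sum>m<n. a^m)"
      by (simp add: sum_distrib_left sum_distrib_right power_commutes)
    show ?thesis using Suc power_commutes[of a n] comm by (simp add: algebra_simps)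
  qed
  finally show ?case using 1 by simp
qed simp

lemma roots_sum:
  assumes "0 < n" "m < n"
  shows "(\<Sum>j<n. (cis (2 * pi / real n) ^ j) ^ m) = (if m = 0 then of_nat n else 0)"
proof (cases "m = 0")
  case False
  define w where "w = cis (2 * pi / real n) ^ m"
  have wm: "w = cis (2 * pi * real m / real n)"
    unfolding w_def by (simp add: Complex.DeMoivre mult_ac)
  have w1: "w \<noteq> 1"
  proof
    assume "w = 1"
    hence "cis (2 * pi * real m / real n) = cis (2 * pi * real 0 / real n)" using wm by simp
    with Complex.bij_betw_roots_unity[OF assms(1)] have "m = 0"
      unfolding bij_betw_def inj_on_def using assms by blast
    with False show False by simp
  qed
  have wn: "w ^ n = 1"
  proof -
    have "w ^ n = cis (real n * (2 * pi * real m / real n))" unfolding wm by (simp add: Complex.DeMoivre)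
    also have "\<dots> = cis (2 * pi * real m)" using assms by simp
    also have "\<dots> = cis (2 * pi) ^ m" by (simp add: Complex.DeMoivre mult_ac)
    also have "cis (2 * pi) = 1" by (simp add: complex_eq_iff)
    finally show ?thesis by simp
  qed
  have "(\<Sum>j<n. (cis (2 * pi / real n) ^ j) ^ m) = (\<Sum>j<n. w ^ j)"
    unfolding w_def by (simp add: power_mult[symmetric] mult.commute)
  also have "\<dots> = (w ^ n - 1) / (w - 1)" using w1 by (simp add: geometric_sum)
  also have "\<dots> = 0" using wn by simp
  finally show ?thesis using False by simp
qed simp

lemma cis_root_pow: "0 < n \<Longrightarrow> (cis (2 * pi / real n) ^ j) ^ n = 1"
proof -
  assume n: "0 < n"
  have "cis (2 * pi / real n) ^ n = cis (2 * pi)" using n by (simp add: Complex.DeMoivre)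
  also have "\<dots> = 1" by (simp add: complex_eq_iff)
  moreover have "(cis (2 * pi / real n) ^ j) ^ n = (cis (2 * pi / real n) ^ n) ^ j"
    by (simp only: power_mult[symmetric] mult.commute)
  ultimately show ?thesis by simp
qed



lemma avg_inv:
  fixes x :: "'a::unital_cstar_algebra"
  assumes n: "0 < n"
    and F: "\<And>z. cmod z = 1 \<Longrightarrow> isinv (1 - emb z * x) (F z)"
    and l: "cmod l = 1"
  shows "isinv (1 - emb (l ^ n) * x ^ n)
           (emb (1 / of_nat n) * (\<Sum>j<n. F (cis (2 * pi / real n) ^ j * l)))"
proof -
  define w where "w = cis (2 * pi / real n)"
  define Y where "Y = 1 - emb (l ^ n) * x ^ n"
  define Sg where "Sg = (\<Sum>m<n. emb (l ^ m) * x ^ m :: 'a)"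
  have one: "F z * Y = (\<Sum>m<n. emb (z ^ m) * x ^ m) \<and> Y * F z = (\<Sum>m<n. emb (z ^ m) * x ^ m)"
    if z: "cmod z = 1" "z ^ n = l ^ n" for z
  proof -
    define a where "a = emb z * x"
    have g: "(1 - a) * (\<Sum>m<n. a ^ m) = 1 - a ^ n" "(\<Sum>m<n. a ^ m) * (1 - a) = 1 - a ^ n"
      using geom_ring by blast+
    have ai: "isinv (1 - a) (F z)" unfolding a_def by (rule F[OF z(1)])
    have an: "a ^ n = emb (l ^ n) * x ^ n" unfolding a_def power_mult_emb z(2) ..
    have am: "(\<Sum>m<n. a ^ m) = (\<Sum>m<n. emb (z ^ m) * x ^ m)" unfolding a_def power_mult_emb ..
    have "F z * Y = F z * ((1 - a) * (\<Sum>m<n. a ^ m))" unfolding Y_def g(1) an ..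
    also have "\<dots> = (\<Sum>m<n. a ^ m)" using ai unfolding isinv_def by (simp add: mult.assoc[symmetric])
    finally have 1: "F z * Y = (\<Sum>m<n. emb (z ^ m) * x ^ m)" using am by simp
    have "Y * F z = ((\<Sum>m<n. a ^ m) * (1 - a)) * F z" unfolding Y_def g(2) an ..
    also have "\<dots> = (\<Sum>m<n. a ^ m)" using ai unfolding isinv_def by (simp add: mult.assoc)
    finally have 2: "Y * F z = (\<Sum>m<n. emb (z ^ m) * x ^ m)" using am by simp
    show ?thesis using 1 2 by simp
  qed
  have zs: "cmod (w ^ j * l) = 1" "(w ^ j * l) ^ n = l ^ n" for j
    using l cis_root_pow[OF n, of j] unfolding w_def by (simp_all add: norm_mult norm_power power_mult_distrib)
  have tot: "(\<Sum>j<n. \<Sum>m<n. emb ((w ^ j * l) ^ m) * x ^ m) = (of_nat n :: 'a)"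
  proof -
    have "(\<Sum>j<n. \<Sum>m<n. emb ((w ^ j * l) ^ m) * x ^ m)
        = (\<Sum>m<n. \<Sum>j<n. emb ((w ^ j) ^ m * l ^ m) * x ^ m)"
      by (subst sum.swap) (simp add: power_mult_distrib)
    also have "\<dots> = (\<Sum>m<n. emb ((\<Sum>j<n. (w ^ j) ^ m) * l ^ m) * x ^ m)"
      by (simp add: sum_distrib_right emb_sum)
    also have "\<dots> = (\<Sum>m<n. if m = 0 then (of_nat n :: 'a) else 0)"
      using roots_sum[OF n] unfolding w_def[symmetric]
      by (intro sum.cong refl) (simp add: emb_of_nat)
    also have "\<dots> = of_nat n" using n by simp
    finally show ?thesis .
  qed
  have A: "(\<Sum>j<n. F (w ^ j * l)) * Y = of_nat n"
    using one[OF zs] tot by (simp add: sum_distrib_right)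
  have B: "Y * (\<Sum>j<n. F (w ^ j * l)) = of_nat n"
    using one[OF zs] tot by (simp add: sum_distrib_left)
  have e: "emb (1 / of_nat n) * (of_nat n :: 'a) = 1"
    using n by (simp add: emb_of_nat[symmetric] emb_mult[symmetric])
  have "emb (1 / of_nat n) * (\<Sum>j<n. F (w ^ j * l)) * Y = 1"
    using A e by (simp add: mult.assoc)
  moreover have "Y * (emb (1 / of_nat n) * (\<Sum>j<n. F (w ^ j * l))) = 1"
    using B e by (metis emb_comm mult.assoc)
  ultimately show ?thesis unfolding isinv_def Y_def w_def by simp
qed



lemma F_cont:
  fixes x :: "'a::unital_cstar_algebra"
  assumes nx: "norm x = 1"
    and F: "\<And>z. cmod z = 1 \<Longrightarrow> isinv (1 - emb z * x) (F z)"
  shows "continuous_on (sphere 0 1) F"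
  unfolding continuous_on_iff
proof (intro ballI allI impI)
  fix z e assume z: "z \<in> sphere (0::complex) 1" and e: "(0::real) < e"
  have z1: "cmod z = 1" using z by simp
  define B where "B = norm (F z) + 1"
  have B: "B \<ge> 1" unfolding B_def by simp
  define d where "d = min (1 / (2 * B)) (e / (2 * B^2))"
  have d: "d > 0" unfolding d_def using B e by simp
  show "\<exists>d>0. \<forall>x'\<in>sphere 0 1. dist x' z < d \<longrightarrow> dist (F x') (F z) < e"
  proof (intro exI conjI ballI impI, fact d)
    fix w assume w: "w \<in> sphere (0::complex) 1" and wz: "dist w z < d"
    have w1: "cmod w = 1" using w by simp
    have Fz: "isinv (1 - emb z * x) (F z)" by (rule F[OF z1])
    have Fw: "isinv (1 - emb w * x) (F w)" by (rule F[OF w1])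
    have a1: "F w * (1 - emb z * x) * F z = F w" using Fz unfolding isinv_def by (simp add: mult.assoc)
    have a2: "F w * (1 - emb w * x) * F z = F z" using Fw unfolding isinv_def by simp
    have id: "F w - F z = F w * (emb (w - z) * x) * F z"
    proof -
      have "F w * (emb (w - z) * x) * F z = F w * (1 - emb z * x) * F z - F w * (1 - emb w * x) * F z"
        by (simp add: emb_diff algebra_simps)
      thus ?thesis using a1 a2 by simp
    qed
    have nb: "norm (F w - F z) \<le> norm (F w) * cmod (w - z) * B"
    proof -
      have "norm (F w - F z) \<le> norm (F w * (emb (w - z) * x)) * norm (F z)"
        unfolding id by (rule norm_mult_ineq)
      also have "\<dots> \<le> norm (F w) * cmod (w - z) * norm (F z)"
        using norm_mult_ineq[of "F w" "emb (w - z) * x"] nx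
        by (intro mult_right_mono) (simp_all add: norm_emb_mult)
      also have "\<dots> \<le> norm (F w) * cmod (w - z) * B"
        unfolding B_def by (intro mult_left_mono) simp_all
      finally show ?thesis .
    qed
    have dz: "cmod (w - z) < d" using wz by (simp add: dist_norm)
    have "cmod (w - z) * B \<le> 1/2"
    proof -
      have "cmod (w - z) * B \<le> (1 / (2 * B)) * B"
        using dz B unfolding d_def by (intro mult_right_mono) simp_all
      thus ?thesis using B by simp
    qed
    hence "norm (F w) * cmod (w - z) * B \<le> norm (F w) / 2"
      using mult_left_mono[of "cmod (w - z) * B" "1/2" "norm (F w)"] by (simp add: mult.assoc)
    moreover have "norm (F w) \<le> norm (F z) + norm (F w - F z)"
      using norm_triangle_ineq[of "F z" "F w - F z"] by simp
    moreover have "norm (F z) \<le> B" unfolding B_def by simp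
    ultimately have fw: "norm (F w) \<le> 2 * B" using nb by linarith
    have "norm (F w - F z) \<le> 2 * B * cmod (w - z) * B"
      using nb fw B by (meson le_trans mult_right_mono norm_ge_zero order.trans zero_le_one)
    also have "\<dots> = 2 * B^2 * cmod (w - z)" by (simp add: power2_eq_square)
    also have "\<dots> < 2 * B^2 * (e / (2 * B^2))"
      using dz B unfolding d_def by (intro mult_strict_left_mono) simp_all
    also have "\<dots> = e" using B by simp
    finally show "dist (F w) (F z) < e" by (simp add: dist_norm)
  qed
qed



lemma key_G:
  fixes x :: "'a::unital_cstar_algebra"
  assumes sa: "cs_star x = x" and nx: "norm x = 1"
    and inv: "\<And>l. cmod l = 1 \<Longrightarrow> \<exists>b. isinv (1 - emb l * x) b"
  shows False
proof -
  define F where "F l = (SOME b. isinv (1 - emb l * x) b)" for l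
  have Fi: "isinv (1 - emb l * x) (F l)" if "cmod l = 1" for l
    unfolding F_def using inv[OF that] by (rule someI_ex)
  have uc: "uniformly_continuous_on (sphere 0 1) F"
    by (rule compact_uniformly_continuous[OF F_cont[OF nx Fi] compact_sphere])
  then obtain dl where dl: "dl > 0"
    and dlp: "\<And>z z'. z \<in> sphere 0 1 \<Longrightarrow> z' \<in> sphere 0 1 \<Longrightarrow> dist z' z < dl \<Longrightarrow> dist (F z') (F z) < 1/4"
    unfolding uniformly_continuous_on_def by (metis divide_pos_pos zero_less_numeral zero_less_one)
  have lim0: "(\<lambda>k. pi * (1/2) ^ k) \<longlonglongrightarrow> 0"
    by (intro tendsto_mult_right_zero LIMSEQ_power_zero) simp
  have lim: "(\<lambda>k. cis (pi * (1/2) ^ k)) \<longlonglongrightarrow> cis 0"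
    by (rule tendsto_cis[OF lim0])
  then obtain k where k: "dist (cis (pi * (1/2) ^ k)) 1 < dl"
    using dl by (metis cis_zero LIMSEQ_D dist_norm order_refl)
  define n :: nat where "n = 2 ^ k"
  have n: "0 < n" unfolding n_def by simp
  define ze where "ze = cis (pi * (1/2) ^ k)"
  have zen: "ze ^ n = -1"
    unfolding ze_def n_def by (simp add: Complex.DeMoivre power_one_over)
  have ze1: "cmod ze = 1" unfolding ze_def by simp
  define w where "w = cis (2 * pi / real n)"
  define P0 where "P0 = emb (1 / of_nat n) * (\<Sum>j<n. F (w ^ j * 1))"
  define P1 where "P1 = emb (1 / of_nat n) * (\<Sum>j<n. F (w ^ j * ze))"
  define y where "y = x ^ n"
  have i0: "isinv (1 - y) P0"
    using avg_inv[OF n Fi, of 1] unfolding P0_def w_def y_def by simp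
  have i1: "isinv (1 + y) P1"
    using avg_inv[OF n Fi ze1] zen unfolding P1_def w_def y_def by (simp add: emb_minus)
  have ny: "norm y = 1" unfolding y_def n_def using norm_sa_pow2[OF sa, of k] nx by simp
  have iden: "(1 - y) * (P0 - P1) * (1 + y) = y + y"
  proof -
    have "(1 - y) * (P0 - P1) * (1 + y) = ((1 - y) * P0) * (1 + y) - (1 - y) * (P1 * (1 + y))"
      by (simp add: algebra_simps)
    also have "\<dots> = (1 + y) - (1 - y)" using i0 i1 unfolding isinv_def by simp
    finally show ?thesis by simp
  qed
  have nd: "norm (P0 - P1) < 1/4"
  proof -
    have "P0 - P1 = emb (1 / of_nat n) * (\<Sum>j<n. F (w ^ j * 1) - F (w ^ j * ze))"
      unfolding P0_def P1_def by (simp add: sum_subtractf right_diff_distrib)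
    hence "norm (P0 - P1) = (1 / real n) * norm (\<Sum>j<n. F (w ^ j * 1) - F (w ^ j * ze))"
      by (simp add: norm_emb_mult norm_divide)
    also have "\<dots> \<le> (1 / real n) * (\<Sum>j<n. norm (F (w ^ j * 1) - F (w ^ j * ze)))"
      by (intro mult_left_mono norm_sum) simp
    also have "\<dots> < (1 / real n) * (\<Sum>j<n. 1/4)"
    proof (intro mult_strict_left_mono sum_strict_mono)
      fix j assume "j \<in> {..<n}"
      have wj: "cmod (w ^ j) = 1" unfolding w_def by (simp add: norm_power)
      have s1: "w ^ j * 1 \<in> sphere 0 1" "w ^ j * ze \<in> sphere 0 1" using wj ze1 by (simp_all add: norm_mult)
      have "dist (w ^ j * ze) (w ^ j * 1) = cmod (w ^ j) * cmod (ze - 1)"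
        by (simp add: dist_norm norm_mult[symmetric] right_diff_distrib)
      also have "\<dots> < dl" using wj k unfolding ze_def by (simp add: dist_norm)
      finally have "dist (F (w ^ j * ze)) (F (w ^ j * 1)) < 1/4" by (rule dlp[OF s1])
      thus "norm (F (w ^ j * 1) - F (w ^ j * ze)) < 1/4" by (simp add: dist_norm norm_minus_commute)
    qed (use n in auto)
    also have "\<dots> = 1/4" using n by simp
    finally show ?thesis .
  qed
  have two: "norm (y + y) = 2"
  proof -
    have e: "norm ((2::real) *\<^sub>R y) = 2 * norm y" by (simp only: norm_scaleR abs_numeral)
    have "y + y = (2::real) *\<^sub>R y" by (rule scaleR_2[symmetric])
    thus ?thesis using e ny by (simp only:)
  qed
  have "norm (y + y) \<le> norm (1 - y) * norm (P0 - P1) * norm (1 + y)"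
  proof -
    have "norm ((1 - y) * (P0 - P1) * (1 + y)) \<le> norm ((1 - y) * (P0 - P1)) * norm (1 + y)"
      by (rule norm_mult_ineq)
    also have "\<dots> \<le> norm (1 - y) * norm (P0 - P1) * norm (1 + y)"
      by (intro mult_right_mono norm_mult_ineq norm_ge_zero)
    finally show ?thesis unfolding iden .
  qed
  also have "\<dots> \<le> 2 * norm (P0 - P1) * 2"
  proof -
    have "norm (1 - y) \<le> 2" using norm_triangle_ineq4[of 1 y] ny by simp
    moreover have "norm (1 + y) \<le> 2" using norm_triangle_ineq[of 1 y] ny by simp
    ultimately show ?thesis by (intro mult_mono) simp_all
  qed
  finally have "norm (y + y) \<le> 2 * norm (P0 - P1) * 2" .
  thus False using nd two by linarith
qed


lemma norm_le_spec:
  fixes h :: "'a::unital_cstar_algebra"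
  assumes sa: "cs_star h = h" and r: "0 \<le> r"
    and sp: "\<And>z. z \<in> cs_spectrum h \<Longrightarrow> cmod z \<le> r"
  shows "norm h \<le> r"
proof (rule ccontr)
  assume "\<not> norm h \<le> r"
  hence nr: "norm h > r" by simp
  define m where "m = norm h"
  have m: "m > 0" unfolding m_def using nr r by linarith
  define x where "x = emb (complex_of_real (1/m)) * h"
  have sx: "cs_star x = x"
    unfolding x_def by (simp add: cs_star_mult sa star_emb emb_comm)
  have nx: "norm x = 1" unfolding x_def using m unfolding norm_emb_mult m_def by (simp add: norm_divide)
  show False
  proof (rule key_G[OF sx nx])
    fix l :: complex assume l: "cmod l = 1"
    have l0: "l \<noteq> 0" using l by auto
    have "cmod (complex_of_real m / l) = m" using l m by (simp add: norm_divide)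
    hence "complex_of_real m / l \<notin> cs_spectrum h" using sp nr unfolding m_def by force
    then obtain q where q: "isinv (h - emb (complex_of_real m / l)) q" unfolding spec_iff by blast
    have lm0: "l / complex_of_real m \<noteq> 0" using l0 m by simp
    have "isinv (- (emb (l / complex_of_real m) * (h - emb (complex_of_real m / l))))
                (- (emb (1 / (l / complex_of_real m)) * q))"
      by (rule isinv_neg[OF isinv_scale[OF q lm0]])
    moreover have "- (emb (l / complex_of_real m) * (h - emb (complex_of_real m / l))) = 1 - emb l * x"
    proof -
      have "(l / complex_of_real m) * (complex_of_real m / l) = 1" using l0 m by simp
      hence "emb (l / complex_of_real m) * emb (complex_of_real m / l) = (1::'a)"
        by (metis emb_mult emb_one)
      moreover have "emb (l / complex_of_real m) * h = emb l * x"
      proof -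
        have "l / complex_of_real m = l * complex_of_real (1/m)" by (simp add: divide_inverse)
        thus ?thesis unfolding x_def by (metis emb_mult mult.assoc)
      qed
      ultimately show ?thesis by (simp add: right_diff_distrib)
    qed
    ultimately show "\<exists>b. isinv (1 - emb l * x) b" by auto
  qed
qed


lemma star_embR: "cs_star (emb (complex_of_real R)) = (emb (complex_of_real R) :: 'a::unital_cstar_algebra)"
  by (simp add: star_emb)

lemma pos_norm_shift:
  fixes a :: "'a::unital_cstar_algebra"
  assumes a: "cs_pos a" and R: "norm a \<le> R"
  shows "norm (emb (complex_of_real R) - a) \<le> R"
proof (rule norm_le_spec)
  show "cs_star (emb (complex_of_real R) - a) = emb (complex_of_real R) - a"
    using a unfolding cs_pos_def by (simp add: star_diff star_embR)
  show "0 \<le> R" using R norm_ge_zero[of a] by linarith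
  fix z assume "z \<in> cs_spectrum (emb (complex_of_real R) - a)"
  hence s: "complex_of_real R - z \<in> cs_spectrum a" by (simp add: spec_shift)
  hence im: "Im (complex_of_real R - z) = 0" and re: "Re (complex_of_real R - z) \<ge> 0"
    using a unfolding cs_pos_def by auto
  have "cmod (complex_of_real R - z) \<le> norm a" using s by (rule spec_le_norm)
  hence "\<bar>Re (complex_of_real R - z)\<bar> \<le> R" using abs_Re_le_cmod[of "complex_of_real R - z"] R by linarith
  moreover have "Im z = 0" using im by simp
  ultimately show "cmod z \<le> R" using re by (simp add: cmod_eq_Re)
qed

lemma pos_of_norm_shift:
  fixes h :: "'a::unital_cstar_algebra"
  assumes sa: "cs_star h = h" and R: "0 \<le> R" and n: "norm (emb (complex_of_real R) - h) \<le> R"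
  shows "cs_pos h"
  unfolding cs_pos_def
proof (intro conjI subsetI CollectI)
  show "cs_star h = h" by (rule sa)
  fix z assume z: "z \<in> cs_spectrum h"
  show im: "Im z = 0" by (rule spec_real[OF sa z])
  have "complex_of_real R - z \<in> cs_spectrum (emb (complex_of_real R) - h)"
    using z by (simp add: spec_shift)
  hence "cmod (complex_of_real R - z) \<le> R" using spec_le_norm n by (meson order_trans)
  hence "\<bar>R - Re z\<bar> \<le> R" using abs_Re_le_cmod[of "complex_of_real R - z"] by simp
  thus "Re z \<ge> 0" by linarith
qed

lemma pos_add:
  fixes a c :: "'a::unital_cstar_algebra"
  assumes a: "cs_pos a" and c: "cs_pos c"
  shows "cs_pos (a + c)"
proof (rule pos_of_norm_shift)
  show "cs_star (a + c) = a + c" using a c unfolding cs_pos_def by (simp add: cs_star_add)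
  show "0 \<le> norm a + norm c" by simp
  have "emb (complex_of_real (norm a + norm c)) - (a + c)
        = (emb (complex_of_real (norm a)) - a) + (emb (complex_of_real (norm c)) - c)"
    by (simp add: emb_add)
  hence "norm (emb (complex_of_real (norm a + norm c)) - (a + c))
      \<le> norm (emb (complex_of_real (norm a)) - a) + norm (emb (complex_of_real (norm c)) - c)"
    by (metis norm_triangle_ineq)
  also have "\<dots> \<le> norm a + norm c"
    using pos_norm_shift[OF a order_refl] pos_norm_shift[OF c order_refl] by linarith
  finally show "norm (emb (complex_of_real (norm a + norm c)) - (a + c)) \<le> norm a + norm c" .
qed

lemma norm_mono_pos:
  fixes a b :: "'a::unital_cstar_algebra"
  assumes a: "cs_pos a" and ab: "cs_le a b"
  shows "norm a \<le> norm b"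
proof -
  define t where "t = norm b"
  have c: "cs_pos (b - a)" using ab unfolding cs_le_def .
  have b: "cs_pos b" using pos_add[OF a c] by simp
  have sb: "cs_star b = b" using b unfolding cs_pos_def by simp
  have tb: "cs_pos (emb (complex_of_real t) - b)"
  proof (rule pos_of_norm_shift)
    show "cs_star (emb (complex_of_real t) - b) = emb (complex_of_real t) - b"
      by (simp add: star_diff star_embR sb)
    show "0 \<le> t" unfolding t_def by simp
    show "norm (emb (complex_of_real t) - (emb (complex_of_real t) - b)) \<le> t"
      unfolding t_def by simp
  qed
  have ta: "cs_pos (emb (complex_of_real t) - a)"
    using pos_add[OF tb c] by simp
  show ?thesis unfolding t_def[symmetric]
  proof (rule norm_le_spec)
    show "cs_star a = a" using a unfolding cs_pos_def by simp
    show "0 \<le> t" unfolding t_def by simp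
    fix z assume z: "z \<in> cs_spectrum a"
    have "complex_of_real t - z \<in> cs_spectrum (emb (complex_of_real t) - a)"
      using z by (simp add: spec_shift)
    hence "Re (complex_of_real t - z) \<ge> 0" using ta unfolding cs_pos_def by auto
    moreover have "Im z = 0" "Re z \<ge> 0" using z a unfolding cs_pos_def by auto
    ultimately show "cmod z \<le> t" by (simp add: cmod_eq_Re)
  qed
qed



lemma geom_cauchy:
  fixes D :: "'x \<Rightarrow> 'x \<Rightarrow> real" and s :: "nat \<Rightarrow> 'x"
  assumes tri: "\<And>x y z. D x y \<le> D x z + D z y"
    and sym: "\<And>x y. D x y = D y x"
    and zero: "\<And>x. D x x = 0"
    and bnd: "\<And>n. D (s n) (s (Suc n)) \<le> C * r ^ n"
    and C: "0 \<le> C" and r: "0 \<le> r" "r < 1"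
  shows "\<forall>e>0. \<exists>N. \<forall>n\<ge>N. \<forall>m\<ge>N. D (s n) (s m) < e"
proof -
  have step: "D (s n) (s (n + k)) \<le> C * (\<Sum>i<k. r ^ (n + i))" for n k
  proof (induction k)
    case 0 show ?case using zero by simp
  next
    case (Suc k)
    have "D (s n) (s (n + Suc k)) \<le> D (s n) (s (n + k)) + D (s (n + k)) (s (Suc (n + k)))"
      using tri by simp
    also have "\<dots> \<le> C * (\<Sum>i<k. r ^ (n + i)) + C * r ^ (n + k)"
      using Suc bnd[of "n + k"] by linarith
    finally show ?case by (simp add: distrib_left)
  qed
  have gs: "(\<Sum>i<k. r ^ (n + i)) \<le> r ^ n / (1 - r)" for n k
  proof -
    have "(\<Sum>i<k. r ^ (n + i)) = r ^ n * (\<Sum>i<k. r ^ i)" by (simp add: power_add sum_distrib_left)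
    also have "(\<Sum>i<k. r ^ i) = (1 - r ^ k) / (1 - r)"
      using r by (simp add: sum_gp_strict)
    also have "\<dots> \<le> 1 / (1 - r)" using r by (simp add: divide_right_mono)
    finally show ?thesis using r by (simp add: mult_left_mono divide_inverse)
  qed
  have bd: "D (s n) (s m) \<le> C * (r ^ min n m / (1 - r))" for n m
  proof (cases "n \<le> m")
    case True
    then obtain k where "m = n + k" using le_Suc_ex by blast
    thus ?thesis using step[of n k] gs[of n k] C True by (smt (verit) min_def mult_left_mono)
  next
    case False
    then obtain k where "n = m + k" using le_Suc_ex[of m n] by auto
    thus ?thesis using step[of m k] gs[of m k] C False sym[of "s n" "s m"]
      by (smt (verit) min_def mult_left_mono)
  qed
  have lim: "(\<lambda>N. C * (r ^ N / (1 - r))) \<longlonglongrightarrow> 0"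
    using r by (intro tendsto_mult_right_zero tendsto_divide_zero LIMSEQ_power_zero) simp
  show ?thesis
  proof (intro allI impI)
    fix e :: real assume e: "e > 0"
    obtain N where N0: "\<forall>n\<ge>N. norm (C * (r ^ n / (1 - r)) - 0) < e"
      using LIMSEQ_D[OF lim e] by blast
    have N: "C * (r ^ n / (1 - r)) < e" if "n \<ge> N" for n
      using N0 that by (metis abs_less_iff diff_zero real_norm_def)
    show "\<exists>N. \<forall>n\<ge>N. \<forall>m\<ge>N. D (s n) (s m) < e"
    proof (intro exI allI impI)
      fix n m assume "n \<ge> N" "m \<ge> N"
      hence "min n m \<ge> N" by simp
      thus "D (s n) (s m) < e" using bd[of n m] N by fastforce
    qed
  qed
qed

lemma lim_unique_D:
  fixes D :: "'x \<Rightarrow> 'x \<Rightarrow> real"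
  assumes tri: "\<And>x y z. D x y \<le> D x z + D z y"
    and sym: "\<And>x y. D x y = D y x"
    and zero: "\<And>x y. D x y = 0 \<Longrightarrow> x = y"
    and nn: "\<And>x y. D x y \<ge> 0"
    and a: "(\<lambda>n. D (s n) a) \<longlonglongrightarrow> 0" and b: "(\<lambda>n. D (s n) b) \<longlonglongrightarrow> 0"
  shows "a = b"
proof -
  have "(\<lambda>n. D (s n) a + D (s n) b) \<longlonglongrightarrow> 0 + 0" by (intro tendsto_add a b)
  moreover have "D a b \<le> D (s n) a + D (s n) b" for n using tri[of a b "s n"] sym[of a "s n"] by simp
  ultimately have "D a b \<le> 0" by (intro LIMSEQ_le_const[of _ 0]) auto
  thus ?thesis using nn[of a b] zero by (simp add: antisym)
qed

lemma funpow_fix: "f a = a \<Longrightarrow> (f ^^ n) a = a"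
  by (induction n) auto



theorem corollary3p20:
  fixes d :: "'x \<Rightarrow> 'x \<Rightarrow> 'a::unital_cstar_algebra"
    and T S :: "'x \<Rightarrow> 'x"
    and q \<delta> :: "'x \<Rightarrow> 'x \<Rightarrow> 'a"
  assumes "cs_metric d"
    and "cs_complete d"
    and "\<And>x y. norm (q x y) < 1"
    and "\<And>x y. cs_pos (\<delta> x y)"
    and "\<And>x y n. n \<ge> 1 \<Longrightarrow>
           cs_le (d ((T ^^ n) x) (((S \<circ> T) ^^ n) y))
                 ((cs_star (q x y)) ^ n * \<delta> x y * (q x y) ^ n)"
    and "orbitally_continuous d T"
    and "orbitally_continuous d (S \<circ> T)"
  shows "\<exists>!u. T u = u \<and> S u = u"
proof -
  note met = assms(1)[unfolded cs_metric_def]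
  define D where "D x y = norm (d x y)" for x y
  have pos: "cs_pos (d x y)" for x y using met by blast
  have tri: "D x y \<le> D x z + D z y" for x y z
  proof -
    have "norm (d x y) \<le> norm (d x z + d z y)"
      by (rule norm_mono_pos[OF pos]) (use met in blast)
    also have "\<dots> \<le> norm (d x z) + norm (d z y)" by (rule norm_triangle_ineq)
    finally show ?thesis unfolding D_def .
  qed
  have sym: "D x y = D y x" for x y unfolding D_def using met by metis
  have zero: "D x y = 0 \<Longrightarrow> x = y" for x y unfolding D_def using met by simp
  have zero': "D x x = 0" for x unfolding D_def using met by simp
  have nn: "D x y \<ge> 0" for x y unfolding D_def by simp
  define U where "U = S \<circ> T"
  have bound: "D ((T ^^ n) x) ((U ^^ n) y) \<le> norm (\<delta> x y) * (norm (q x y) ^ 2) ^ n"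
    if n: "n \<ge> 1" for n x y
  proof -
    have "D ((T ^^ n) x) ((U ^^ n) y) \<le> norm ((cs_star (q x y)) ^ n * \<delta> x y * (q x y) ^ n)"
      unfolding D_def U_def by (rule norm_mono_pos[OF pos assms(5)[OF n]])
    also have "\<dots> \<le> norm ((cs_star (q x y)) ^ n) * norm (\<delta> x y) * norm ((q x y) ^ n)"
    proof -
      have "norm ((cs_star (q x y)) ^ n * \<delta> x y * (q x y) ^ n)
            \<le> norm ((cs_star (q x y)) ^ n * \<delta> x y) * norm ((q x y) ^ n)" by (rule norm_mult_ineq)
      also have "\<dots> \<le> norm ((cs_star (q x y)) ^ n) * norm (\<delta> x y) * norm ((q x y) ^ n)"
        by (intro mult_right_mono norm_mult_ineq norm_ge_zero)
      finally show ?thesis .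
    qed
    also have "\<dots> \<le> norm (q x y) ^ n * norm (\<delta> x y) * norm (q x y) ^ n"
      using norm_power_ineq[of "cs_star (q x y)" n] norm_power_ineq[of "q x y" n]
      by (intro mult_mono) (simp_all add: norm_star)
    also have "\<dots> = norm (\<delta> x y) * (norm (q x y) ^ 2) ^ n"
      unfolding power2_eq_square power_mult_distrib by (simp add: mult_ac)
    finally show ?thesis .
  qed
  have rq: "norm (q x y) ^ 2 < 1" "0 \<le> norm (q x y) ^ 2" for x y
  proof -
    have "norm (q x y) * norm (q x y) < 1 * 1"
      using assms(3)[of x y] by (intro mult_strict_mono) simp_all
    thus "norm (q x y) ^ 2 < 1" by (simp add: power2_eq_square)
  qed simp
  have geo0: "(\<lambda>n. c * (norm (q x y) ^ 2) ^ n) \<longlonglongrightarrow> 0" for c x y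
    using rq[of x y] by (intro tendsto_mult_right_zero LIMSEQ_power_zero) simp
  define x0 where "x0 = (undefined :: 'x)"
  define x where "x n = (T ^^ n) x0" for n
  define A where "A = norm (\<delta> x0 x0)"
  define r1 where "r1 = norm (q x0 x0) ^ 2"
  define B where "B = norm (\<delta> (T x0) x0)"
  define r2 where "r2 = norm (q (T x0) x0) ^ 2"
  define r where "r = max r1 r2"
  define C where "C = A + B + D x0 (T x0)"
  have AB: "A \<ge> 0" "B \<ge> 0" unfolding A_def B_def by simp_all
  have r12: "0 \<le> r1" "0 \<le> r2" "r1 \<le> r" "r2 \<le> r" using rq unfolding r1_def r2_def r_def by auto
  have r: "0 \<le> r" "r < 1"
    using r12 apply linarith
    using rq(1)[of x0 x0] rq(1)[of "T x0" x0] unfolding r1_def r2_def r_def by auto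
  have bnd: "D (x n) (x (Suc n)) \<le> C * r ^ n" for n
  proof (cases "n = 0")
    case True
    thus ?thesis unfolding x_def C_def using AB by simp
  next
    case False
    hence n: "n \<ge> 1" by simp
    have xs: "x (Suc n) = (T ^^ n) (T x0)" unfolding x_def by (simp add: funpow_swap1)
    have "D (x n) (x (Suc n)) \<le> D (x n) ((U ^^ n) x0) + D ((T ^^ n) (T x0)) ((U ^^ n) x0)"
      using tri[of "x n" "x (Suc n)" "(U ^^ n) x0"] sym[of "(U ^^ n) x0"] xs by simp
    also have "\<dots> \<le> A * r1 ^ n + B * r2 ^ n"
      using bound[OF n, of x0 x0] bound[OF n, of "T x0" x0] unfolding x_def A_def B_def r1_def r2_def
      by linarith
    also have "\<dots> \<le> A * r ^ n + B * r ^ n"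
      using AB r12 by (intro add_mono mult_left_mono power_mono) simp_all
    also have "\<dots> \<le> C * r ^ n"
      using r nn[of x0 "T x0"] unfolding C_def by (simp add: distrib_right)
    finally show ?thesis .
  qed
  have C: "C \<ge> 0" unfolding C_def using AB nn by simp
  have cauchy: "cs_cauchy d x"
    unfolding cs_cauchy_def using geom_cauchy[of D x C r, OF tri sym zero' bnd C r] unfolding D_def
    by blast
  then obtain u where u: "cs_converges d x u" using assms(2) unfolding cs_complete_def by blast
  have uD: "(\<lambda>n. D (x n) u) \<longlonglongrightarrow> 0" using u unfolding cs_converges_def D_def .
  have sm: "strict_mono (\<lambda>i::nat. i)" by (simp add: strict_mono_def)
  have Tu: "T u = u"
  proof -
    have "cs_converges d (\<lambda>i. (T ^^ i) x0) u" using u unfolding x_def .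
    hence "cs_converges d (\<lambda>i. (T ^^ (i + 1)) x0) (T u)"
      using assms(6) sm unfolding orbitally_continuous_def orbitally_continuous_at_def by blast
    hence 1: "(\<lambda>n. D (x (Suc n)) (T u)) \<longlonglongrightarrow> 0" unfolding cs_converges_def D_def x_def by simp
    have 2: "(\<lambda>n. D (x (Suc n)) u) \<longlonglongrightarrow> 0" using LIMSEQ_Suc[OF uD] .
    show ?thesis using lim_unique_D[OF tri sym zero nn 1 2] .
  qed
  have yD: "(\<lambda>n. D ((U ^^ n) x0) u) \<longlonglongrightarrow> 0"
  proof (rule tendsto_sandwich[of "\<lambda>n. 0" _ _ "\<lambda>n. A * r1 ^ n + D (x n) u"])
    show "\<forall>\<^sub>F n in sequentially. 0 \<le> D ((U ^^ n) x0) u" using nn by simp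
    show "\<forall>\<^sub>F n in sequentially. D ((U ^^ n) x0) u \<le> A * r1 ^ n + D (x n) u"
      unfolding eventually_sequentially
    proof (intro exI allI impI)
      fix n :: nat assume n: "n \<ge> 1"
      have "D ((U ^^ n) x0) u \<le> D ((U ^^ n) x0) (x n) + D (x n) u" by (rule tri)
      also have "D ((U ^^ n) x0) (x n) \<le> A * r1 ^ n"
        using bound[OF n, of x0 x0] sym unfolding x_def A_def r1_def by simp
      finally show "D ((U ^^ n) x0) u \<le> A * r1 ^ n + D (x n) u" by simp
    qed
    show "(\<lambda>n. 0) \<longlonglongrightarrow> (0::real)" by simp
    have "(\<lambda>n. A * r1 ^ n + D (x n) u) \<longlonglongrightarrow> 0 + 0"
      using geo0[of A x0 x0] uD unfolding A_def r1_def by (intro tendsto_add) simp_all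
    thus "(\<lambda>n. A * r1 ^ n + D (x n) u) \<longlonglongrightarrow> 0" by simp
  qed
  have Uu: "U u = u"
  proof -
    have "cs_converges d (\<lambda>i. (U ^^ i) x0) u" using yD unfolding cs_converges_def D_def .
    hence "cs_converges d (\<lambda>i. (U ^^ (i + 1)) x0) (U u)"
      using assms(7) sm unfolding orbitally_continuous_def orbitally_continuous_at_def U_def by blast
    hence 1: "(\<lambda>n. D ((U ^^ (Suc n)) x0) (U u)) \<longlonglongrightarrow> 0" unfolding cs_converges_def D_def by simp
    have 2: "(\<lambda>n. D ((U ^^ (Suc n)) x0) u) \<longlonglongrightarrow> 0" using LIMSEQ_Suc[OF yD] .
    show ?thesis using lim_unique_D[OF tri sym zero nn 1 2] .
  qed
  have Su: "S u = u" using Uu Tu unfolding U_def by simp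
  show ?thesis
  proof (rule ex1I[of _ u])
    show "T u = u \<and> S u = u" using Tu Su by simp
    fix v assume v: "T v = v \<and> S v = v"
    hence Uv: "U v = v" unfolding U_def by simp
    have "D v u \<le> 0"
    proof (rule LIMSEQ_le_const[OF geo0[of "norm (\<delta> v u)" v u]])
      show "\<exists>N. \<forall>n\<ge>N. D v u \<le> norm (\<delta> v u) * (norm (q v u) ^ 2) ^ n"
      proof (intro exI allI impI)
        fix n :: nat assume n: "n \<ge> 1"
        have "D v u = D ((T ^^ n) v) ((U ^^ n) u)"
          using funpow_fix[of T v n] funpow_fix[of U u n] v Uu by simp
        also have "\<dots> \<le> norm (\<delta> v u) * (norm (q v u) ^ 2) ^ n" by (rule bound[OF n])
        finally show "D v u \<le> norm (\<delta> v u) * (norm (q v u) ^ 2) ^ n" .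
      qed
    qed
    hence "D v u = 0" using nn[of v u] by simp
    thus "v = u" by (rule zero)
  qed
qed


end
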